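(* Let $q$ be odd, $\alpha,\beta\in\mathbb{F}_{q^2}$ with $\alpha\ne0$ and $(\beta^q-\beta)^2+4\alpha^{q+1}$ a nonsquare in $\mathbb{F}_q$, and let $R_1=(0,\epsilon,1)$, $U_\infty=(1,0,0)$. If $\ell$ is a line of $\mathrm{PG}(2,q^2)$ not through $U_\infty$, then $|\ell\cap\mathrm{pedal}(R_1)|\in\{0,1,2\}$.
   Context: Points of $\mathrm{PG}(2,q^2)$ have homogeneous coordinates $(x,y,z)$. $\zeta$ is a primitive element of $\mathbb{F}_{q^2}$ and $\epsilon=\zeta^{(q+1)/2}$. $\mathcal U_{\alpha\beta}=\{(x,\alpha x^2+\beta x^{q+1}+r,1): x\in\mathbb{F}_{q^2}, r\in\mathbb{F}_q\}\cup\{(0,1,0)\}$, which under the hypotheses is a unital (a set of $q^3+1$ points meeting every line in $1$ or $q+1$ points), and $R_1\notin\mathcal U_{\alpha\beta}$. For a point $P$ not on the unital, $\mathrm{pedal}(P)$ is the set of points of contact of the $q+1$ tangent lines (lines meeting the unital in exactly one point) through $P$. *)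

theory Defs
  imports Main
begin

type_synonym 'a vec3 = "'a \<times> 'a \<times> 'a"

definition smul3 :: "'a::field \<Rightarrow> 'a vec3 \<Rightarrow> 'a vec3" where
  "smul3 c v = (case v of (x, y, z) \<Rightarrow> (c * x, c * y, c * z))"

definition proj_pt :: "'a::field vec3 \<Rightarrow> 'a vec3 set" where
  "proj_pt v = {smul3 c v | c. c \<noteq> 0}"

definition pg_points :: "'a::field vec3 set set" where
  "pg_points = {proj_pt v | v. v \<noteq> (0, 0, 0)}"

definition line_of :: "'a::field vec3 \<Rightarrow> 'a vec3 set set" where
  "line_of l = (case l of (a, b, c) \<Rightarrow>
     {proj_pt (x, y, z) | x y z. (x, y, z) \<noteq> (0, 0, 0) \<and> a * x + b * y + c * z = 0})"

definition pg_lines :: "'a::field vec3 set set set" where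
  "pg_lines = {line_of l | l. l \<noteq> (0, 0, 0)}"

definition in_Fq :: "nat \<Rightarrow> 'a::field \<Rightarrow> bool" where
  "in_Fq q r \<longleftrightarrow> r ^ q = r"

definition primitive_elem :: "'a::{field,finite} \<Rightarrow> bool" where
  "primitive_elem z \<longleftrightarrow> z \<noteq> 0 \<and> (\<forall>k. 0 < k \<and> k < card (UNIV :: 'a set) - 1 \<longrightarrow> z ^ k \<noteq> 1)"

definition unital_ab :: "nat \<Rightarrow> 'a::field \<Rightarrow> 'a \<Rightarrow> 'a vec3 set set" where
  "unital_ab q \<alpha> \<beta> =
     {proj_pt (x, \<alpha> * x ^ 2 + \<beta> * x ^ (q + 1) + r, 1) | x r. in_Fq q r}
     \<union> {proj_pt (0, 1, 0)}"

definition tangent_line :: "'a vec3 set set \<Rightarrow> 'a::field vec3 set set \<Rightarrow> bool" where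
  "tangent_line U L \<longleftrightarrow> L \<in> pg_lines \<and> card (L \<inter> U) = 1"

definition pedal :: "'a::field vec3 set set \<Rightarrow> 'a vec3 set \<Rightarrow> 'a vec3 set set" where
  "pedal U P = {X. \<exists>L. tangent_line U L \<and> P \<in> L \<and> X \<in> L \<inter> U}"

end

theory Submission
  imports Defs "HOL-Number_Theory.Number_Theory"
begin

lemma prime_CHAR_fin: "prime CHAR('a::{field,finite})"
  by (rule prime_CHAR_semidom) (rule finite_imp_CHAR_pos, simp)

definition addsub :: "'a::field set \<Rightarrow> bool" where
  "addsub T \<longleftrightarrow> 0 \<in> T \<and> (\<forall>x\<in>T. \<forall>y\<in>T. x + y \<in> T)"

lemma addsub_of_nat: "addsub T \<Longrightarrow> x \<in> T \<Longrightarrow> of_nat k * x \<in> T"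
proof (induction k)
  case 0 then show ?case by (simp add: addsub_def)
next
  case (Suc k)
  have "of_nat (Suc k) * x = x + of_nat k * x" by (simp add: algebra_simps)
  with Suc show ?case by (simp add: addsub_def)
qed

lemma addsub_inv:
  fixes T :: "'a::{field,finite} set"
  assumes "addsub T" "of_nat m * x \<in> T" "\<not> CHAR('a) dvd m"
  shows "x \<in> T"
proof -
  have "coprime m CHAR('a)"
    using prime_CHAR_fin assms(3) by (metis coprime_commute prime_imp_coprime)
  then obtain m' where m': "[m * m' = Suc 0] (mod CHAR('a))"
    using cong_solve_coprime_nat by blast
  then have "of_nat (m * m') = (of_nat (Suc 0) :: 'a)"
    using m' by (simp only: of_nat_eq_iff_cong_CHAR)
  then have "of_nat m' * (of_nat m * x) = x" by (simp add: algebra_simps)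
  with addsub_of_nat[OF assms(1,2), of m'] show ?thesis by simp
qed

lemma addsub_neg:
  fixes T :: "'a::{field,finite} set"
  assumes "addsub T" "x \<in> T" shows "- x \<in> T"
proof -
  have p: "CHAR('a) \<ge> 1" using prime_CHAR_fin[where 'a='a] prime_ge_1_nat by blast
  have "(of_nat (CHAR('a) - 1) :: 'a) = of_nat CHAR('a) - 1"
    using p by (simp add: of_nat_diff)
  then have "(of_nat (CHAR('a) - 1) :: 'a) = - 1" by simp
  with addsub_of_nat[OF assms, of "CHAR('a) - 1"] show ?thesis by simp
qed

lemma addsub_grow:
  fixes T :: "'a::{field,finite} set"
  assumes T: "addsub T" and s: "s \<notin> T"
  defines "T' \<equiv> (\<lambda>(t,i). t + of_nat i * s) ` (T \<times> {..<CHAR('a)})"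
  shows "addsub T'" "card T' = CHAR('a) * card T" "s \<in> T'"
proof -
  let ?p = "CHAR('a)"
  have p1: "?p > 1" using prime_CHAR_fin[where 'a='a] prime_gt_1_nat by blast
  have modeq: "(of_nat (n mod ?p) :: 'a) = of_nat n" for n
    by (simp add: of_nat_eq_iff_cong_CHAR cong_def)
  show "addsub T'"
    unfolding addsub_def
  proof (intro conjI ballI)
    show "0 \<in> T'" unfolding T'_def using T p1
      by (intro image_eqI[where x="(0,0)"]) (auto simp: addsub_def)
  next
    fix x y assume "x \<in> T'" "y \<in> T'"
    then obtain t i t' j where x: "x = t + of_nat i * s" "t \<in> T" and y: "y = t' + of_nat j * s" "t' \<in> T"
      unfolding T'_def by auto
    have "x + y = (t + t') + of_nat ((i + j) mod ?p) * s"
      unfolding x y modeq by (simp add: algebra_simps)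
    moreover have "t + t' \<in> T" using T x y by (simp add: addsub_def)
    moreover have "(i + j) mod ?p < ?p" using p1 by simp
    ultimately show "x + y \<in> T'" unfolding T'_def by (auto simp: image_iff)
  qed
  show "s \<in> T'"
    unfolding T'_def using T p1
    by (intro image_eqI[where x="(0,1)"]) (auto simp: addsub_def)
  have inj: "inj_on (\<lambda>(t,i). t + of_nat i * s) (T \<times> {..<?p})"
  proof (rule inj_onI, clarsimp)
    fix t i t' j
    assume tT: "t \<in> T" "t' \<in> T" and ij: "i < ?p" "j < ?p" and eq: "t + of_nat i * s = t' + of_nat j * s"
    have "i = j"
    proof (rule ccontr)
      assume "i \<noteq> j"
      then consider "j < i" | "i < j" by linarith
      then show False
      proof cases
        case 1
        have e: "of_nat (i - j) * s = t' + - t"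
          using eq 1 by (simp add: of_nat_diff algebra_simps)
        have "- t \<in> T" using addsub_neg[OF T tT(1)] .
        then have m: "t' + - t \<in> T" using T tT unfolding addsub_def by blast
        have "0 < i - j" "i - j < ?p" using 1 ij by auto
        then have "\<not> ?p dvd (i - j)" using nat_dvd_not_less by blast
        from addsub_inv[OF T _ this] m e s show False by simp
      next
        case 2
        have e: "of_nat (j - i) * s = t + - t'"
          using eq 2 by (simp add: of_nat_diff algebra_simps)
        have "- t' \<in> T" using addsub_neg[OF T tT(2)] .
        then have m: "t + - t' \<in> T" using T tT unfolding addsub_def by blast
        have "0 < j - i" "j - i < ?p" using 2 ij by auto
        then have "\<not> ?p dvd (j - i)" using nat_dvd_not_less by blast
        from addsub_inv[OF T _ this] m e s show False by simp
      qed
    qed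
    then show "t = t' \<and> i = j" using eq by simp
  qed
  show "card T' = ?p * card T"
    unfolding T'_def by (simp add: card_image[OF inj] card_cartesian_product)
qed

lemma card_CHAR_pow: "\<exists>n. card (UNIV :: 'a::{field,finite} set) = CHAR('a) ^ n"
proof -
  have "\<exists>n. card (UNIV :: 'a set) = CHAR('a) ^ n" if "addsub T" "card T = CHAR('a) ^ k" for T :: "'a set" and k
    using that
  proof (induction "card (UNIV :: 'a set) - card (T :: 'a set)" arbitrary: T k rule: less_induct)
    case (less T)
    show ?case
    proof (cases "T = UNIV")
      case True then show ?thesis using less by auto
    next
      case False
      then obtain s where s: "s \<notin> T" by auto
      define T' where "T' \<equiv> (\<lambda>(t,i). t + of_nat i * s) ` (T \<times> {..<CHAR('a)})"
      note g = addsub_grow[OF less(2) s, folded T'_def]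
      have p1: "CHAR('a) > 1" using prime_CHAR_fin[where 'a='a] prime_gt_1_nat by blast
      have "card T > 0" using less(2) by (auto simp: addsub_def card_gt_0_iff)
      then have "card T' > card T" using g(2) p1 by simp
      moreover have "card T' \<le> card (UNIV :: 'a set)" by (rule card_mono) auto
      ultimately have "card (UNIV :: 'a set) - card T' < card (UNIV :: 'a set) - card T" by linarith
      from less(1)[OF this g(1)] g(2) less(3) show ?thesis by (metis power_Suc)
    qed
  qed
  moreover have "addsub ({0} :: 'a set)" by (simp add: addsub_def)
  moreover have "card ({0} :: 'a set) = CHAR('a) ^ 0" by simp
  ultimately show ?thesis by blast
qed


lemma smul3_simp[simp]: "smul3 c (x, y, z) = (c * x, c * y, c * z)"
  by (simp add: smul3_def)

lemma proj_self: "v \<in> proj_pt v"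
  unfolding proj_pt_def by (rule CollectI, rule exI[of _ 1]) (cases v, auto)

lemma proj_eqD: "proj_pt v = proj_pt w \<Longrightarrow> \<exists>c. c \<noteq> 0 \<and> v = smul3 c w"
  using proj_self[of v] unfolding proj_pt_def by auto

lemma proj_eq_iff1: "proj_pt (a, b, 1) = proj_pt (a', b', (1::'a::field)) \<longleftrightarrow> a = a' \<and> b = b'"
  using proj_eqD[of "(a, b, 1)" "(a', b', 1)"] by auto

lemma proj_ne_inf: "proj_pt (a, b, 1) \<noteq> proj_pt (x, y, (0::'a::field))"
  using proj_eqD[of "(a, b, 1)" "(x, y, 0)"] by auto

lemma mem_line:
  fixes x y z :: "'a::field"
  assumes "(x, y, z) \<noteq> (0, 0, 0)"
  shows "proj_pt (x, y, z) \<in> line_of (a, b, c) \<longleftrightarrow> a * x + b * y + c * z = 0"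
proof
  assume "proj_pt (x, y, z) \<in> line_of (a, b, c)"
  then obtain x' y' z' where e: "proj_pt (x, y, z) = proj_pt (x', y', z')" "a * x' + b * y' + c * z' = 0"
    unfolding line_of_def by auto
  from proj_eqD[OF e(1)] obtain k where "(x, y, z) = smul3 k (x', y', z')" by blast
  then have "a * x + b * y + c * z = k * (a * x' + b * y' + c * z')" by (simp add: algebra_simps)
  with e(2) show "a * x + b * y + c * z = 0" by simp
next
  assume "a * x + b * y + c * z = 0"
  with assms show "proj_pt (x, y, z) \<in> line_of (a, b, c)" unfolding line_of_def by blast
qed

lemma U_mem1:
  "proj_pt (x, y, 1) \<in> unital_ab q \<alpha> \<beta> \<longleftrightarrow> in_Fq q (y - \<alpha> * x ^ 2 - \<beta> * x ^ (q + 1))"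
proof
  assume "proj_pt (x, y, 1) \<in> unital_ab q \<alpha> \<beta>"
  then consider (a) x' r where "proj_pt (x, y, 1) = proj_pt (x', \<alpha> * x' ^ 2 + \<beta> * x' ^ (q + 1) + r, 1)" "in_Fq q r"
    | (b) "proj_pt (x, y, 1) = proj_pt (0, 1, 0)"
    unfolding unital_ab_def by blast
  then show "in_Fq q (y - \<alpha> * x ^ 2 - \<beta> * x ^ (q + 1))"
  proof cases
    case a then show ?thesis by (simp add: proj_eq_iff1)
  next
    case b then show ?thesis using proj_ne_inf by blast
  qed
next
  assume "in_Fq q (y - \<alpha> * x ^ 2 - \<beta> * x ^ (q + 1))"
  then show "proj_pt (x, y, 1) \<in> unital_ab q \<alpha> \<beta>"
    unfolding unital_ab_def
    by (intro UnI1 CollectI exI[of _ x] exI[of _ "y - \<alpha> * x ^ 2 - \<beta> * x ^ (q + 1)"]) simp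
qed

lemma U_inf: "proj_pt (0, 1, 0) \<in> unital_ab q \<alpha> \<beta>"
  unfolding unital_ab_def by simp

lemma U_cases: "X \<in> unital_ab q \<alpha> \<beta> \<Longrightarrow> X = proj_pt (0, 1, 0) \<or> (\<exists>x y. X = proj_pt (x, y, 1))"
  unfolding unital_ab_def by blast

lemma quad_card:
  fixes A B C :: "'a::{field,finite}"
  assumes "A \<noteq> 0"
  shows "card {t. A * t ^ 2 + B * t + C = 0} \<le> 2"
proof (cases "{t. A * t ^ 2 + B * t + C = 0} = {}")
  case True then show ?thesis by simp
next
  case False
  then obtain t1 where t1: "A * t1 ^ 2 + B * t1 + C = 0" by auto
  have "{t. A * t ^ 2 + B * t + C = 0} \<subseteq> {t1, - B / A - t1}"
  proof
    fix t assume "t \<in> {t. A * t ^ 2 + B * t + C = 0}"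
    then have "A * t ^ 2 + B * t + C = 0" by simp
    moreover have "(t - t1) * (A * (t + t1) + B) = (A * t ^ 2 + B * t + C) - (A * t1 ^ 2 + B * t1 + C)"
      by (simp add: algebra_simps power2_eq_square)
    ultimately have "(t - t1) * (A * (t + t1) + B) = 0" using t1 by simp
    then have "t = t1 \<or> A * (t + t1) + B = 0" by simp
    moreover have "t = (A * (t + t1) + B) / A - B / A - t1" using assms by (simp add: field_simps)
    ultimately show "t \<in> {t1, - B / A - t1}" by auto
  qed
  then have "card {t. A * t ^ 2 + B * t + C = 0} \<le> card {t1, - B / A - t1}"
    by (rule card_mono[rotated]) simp
  also have "\<dots> \<le> 2" by (simp add: card_insert_le_m1)
  finally show ?thesis .
qed


locale uctx =
  fixes q :: nat and \<alpha> \<beta> \<epsilon> :: "'a::{field,finite}"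
  assumes c_add: "\<And>x y :: 'a. (x + y) ^ q = x ^ q + y ^ q"
    and c_inv: "\<And>x :: 'a. (x ^ q) ^ q = x"
    and qpos: "0 < q"
    and eps: "\<epsilon> ^ q = - \<epsilon>" and eps0: "\<epsilon> \<noteq> 0" and two: "(2::'a) \<noteq> 0"
    and alpha: "\<alpha> \<noteq> 0"
    and nonsq: "\<not> (\<exists>y. in_Fq q y \<and> y ^ 2 = (\<beta> ^ q - \<beta>) ^ 2 + 4 * \<alpha> ^ (q + 1))"
begin

lemma c_zero: "(0::'a) ^ q = 0" using qpos by simp
lemma c_neg: "(- x :: 'a) ^ q = - (x ^ q)"
proof -
  have "(x + - x) ^ q = x ^ q + (- x) ^ q" by (rule c_add)
  then show ?thesis using c_zero by (simp add: eq_neg_iff_add_eq_0 add.commute)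
qed
lemma c_diff: "(x - y :: 'a) ^ q = x ^ q - y ^ q"
  using c_add[of x "- y"] c_neg[of y] by simp
lemma c_sq: "((x::'a) ^ 2) ^ q = (x ^ q) ^ 2"
  by (simp add: power_mult[symmetric] mult.commute)
lemma c_two: "(2::'a) ^ q = 2"
  using c_add[of 1 1] by simp
lemma c_div: "((x::'a) / y) ^ q = x ^ q / y ^ q" by (rule power_divide)
lemma c_eq0: "((x::'a) ^ q = 0) \<longleftrightarrow> x = 0"
  using c_inv[of x] c_zero by (metis)

lemmas c_simps = c_add c_neg c_diff c_sq c_two c_div power_mult_distrib c_inv c_zero eps

definition "\<delta> = \<beta> ^ q - \<beta>"
definition "Qf h = \<alpha> ^ q * (h ^ q) ^ 2 - \<alpha> * h ^ 2 + \<delta> * h * h ^ q"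
definition "Yf x = 2 * \<alpha> * x ^ 2 - \<delta> * x * x ^ q + \<epsilon>"

lemma delta_c: "\<delta> ^ q = - \<delta>"
  unfolding \<delta>_def by (simp add: c_simps)

lemma Q_c: "(Qf h) ^ q = - Qf h"
  unfolding Qf_def by (simp add: c_simps delta_c algebra_simps)

lemma aniso: assumes "h \<noteq> 0" shows "Qf h \<noteq> 0"
proof
  assume Q0: "Qf h = 0"
  have H0: "h ^ q \<noteq> 0" using assms c_eq0 by simp
  define u where "u = h ^ q / h"
  have u0: "u \<noteq> 0" using H0 assms by (simp add: u_def)
  have uc: "u ^ q = 1 / u" using H0 assms by (simp add: u_def c_simps)
  have E: "\<alpha> ^ q * u ^ 2 + \<delta> * u - \<alpha> = 0"
  proof -
    have "\<alpha> ^ q * u ^ 2 + \<delta> * u - \<alpha> = Qf h / h ^ 2"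
      using assms by (simp add: u_def Qf_def field_simps power2_eq_square)
    then show ?thesis using Q0 by simp
  qed
  define y where "y = 2 * \<alpha> ^ q * u + \<delta>"
  have yc: "y ^ q = 2 * \<alpha> / u - \<delta>"
    unfolding y_def by (simp add: c_simps uc delta_c)
  have "y - y ^ q = 2 * (\<alpha> ^ q * u ^ 2 + \<delta> * u - \<alpha>) / u"
    using u0 unfolding yc by (simp add: y_def field_simps power2_eq_square)
  then have "y ^ q = y" using E by simp
  moreover have "y ^ 2 = \<delta> ^ 2 + 4 * (\<alpha> ^ q * \<alpha>)"
  proof -
    have "y ^ 2 = 4 * \<alpha> ^ q * (\<alpha> ^ q * u ^ 2 + \<delta> * u - \<alpha>) + \<delta> ^ 2 + 4 * (\<alpha> ^ q * \<alpha>)"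
      by (simp add: y_def algebra_simps power2_eq_square)
    then show ?thesis using E by simp
  qed
  ultimately show False using nonsq by (auto simp: in_Fq_def \<delta>_def power_add mult.commute)
qed


lemma pedal_char:
  assumes "X \<in> pedal (unital_ab q \<alpha> \<beta>) (proj_pt (0, \<epsilon>, 1))"
  shows "\<exists>x0. X = proj_pt (x0, Yf x0, 1) \<and> Qf x0 = 2 * \<epsilon>"
proof -
  let ?U = "unital_ab q \<alpha> \<beta>"
  obtain L where tl: "tangent_line ?U L" and PL: "proj_pt (0, \<epsilon>, 1) \<in> L"
    and XL: "X \<in> L" and XU: "X \<in> ?U"
    using assms unfolding pedal_def by blast
  have c1: "card (L \<inter> ?U) = 1" and Lp: "L \<in> pg_lines" using tl by (auto simp: tangent_line_def)
  then obtain Z where "L \<inter> ?U = {Z}" by (auto simp: card_1_singleton_iff)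
  with XL XU have uniq: "\<And>Y. Y \<in> L \<Longrightarrow> Y \<in> ?U \<Longrightarrow> Y = X" by blast
  obtain a b c where L: "L = line_of (a, b, c)" and abc: "(a, b, c) \<noteq> (0, 0, 0)"
    using Lp unfolding pg_lines_def by auto
  have memL: "\<And>x y z. (x, y, z) \<noteq> (0, 0, 0) \<Longrightarrow> proj_pt (x, y, z) \<in> L \<longleftrightarrow> a * x + b * y + c * z = 0"
    unfolding L by (rule mem_line)
  have Peq: "b * \<epsilon> + c = 0" using memL[of 0 \<epsilon> 1] PL by simp
  have b0: "b \<noteq> 0"
  proof
    assume "b = 0"
    then have "c = 0" using Peq by simp
    have "proj_pt (0, 0, 1) \<in> L" using memL[of 0 0 1] \<open>c = 0\<close> by simp
    moreover have "proj_pt (0, 1, 0) \<in> L" using memL[of 0 1 0] \<open>b = 0\<close> by simp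
    moreover have "proj_pt (0, 0, 1) \<in> ?U" by (simp add: U_mem1 in_Fq_def c_zero)
    moreover have "proj_pt (0, 1, 0) \<in> ?U" by (rule U_inf)
    ultimately show False using uniq proj_ne_inf by metis
  qed
  define m where "m = - a / b"
  have lineeq: "proj_pt (x, y, 1) \<in> L \<longleftrightarrow> y = m * x + \<epsilon>" for x y
  proof -
    have "proj_pt (x, y, 1) \<in> L \<longleftrightarrow> a * x + b * y + c = 0" using memL[of x y 1] by simp
    also have "\<dots> \<longleftrightarrow> y = m * x + \<epsilon>"
    proof -
      have "c = - b * \<epsilon>" using Peq by (simp add: eq_neg_iff_add_eq_0 add.commute)
      then show ?thesis using b0 unfolding m_def by (auto simp: field_simps)
    qed
    finally show ?thesis .
  qed
  obtain x0 y0 where X: "X = proj_pt (x0, y0, 1)"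
    using U_cases[OF XU] XL memL[of 0 1 0] b0 by auto
  have y0: "y0 = m * x0 + \<epsilon>" using XL lineeq X by simp
  define F where "F x = m * x + \<epsilon> - \<alpha> * x ^ 2 - \<beta> * (x * x ^ q)" for x
  have key: "x = x0" if Fx: "F x ^ q = F x" for x
  proof -
    have "proj_pt (x, m * x + \<epsilon>, 1) \<in> ?U" using Fx by (simp add: U_mem1 in_Fq_def F_def)
    moreover have "proj_pt (x, m * x + \<epsilon>, 1) \<in> L" using lineeq by simp
    ultimately have "proj_pt (x, m * x + \<epsilon>, 1) = X" using uniq by blast
    then show "x = x0" using X by (simp add: proj_eq_iff1)
  qed
  have Fx0: "F x0 ^ q = F x0" using XU X y0 by (simp add: U_mem1 in_Fq_def F_def)
  define C where "C = \<delta> * x0 ^ q - 2 * \<alpha> * x0 + m"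
  have C0: "C = 0"
  proof (rule ccontr)
    assume Cn: "C \<noteq> 0"
    define h where "h = \<epsilon> / C"
    have h0: "h \<noteq> 0" using eps0 Cn by (simp add: h_def)
    have Qh: "Qf h \<noteq> 0" using aniso h0 .
    define t where "t = - 2 * \<epsilon> / Qf h"
    have tq: "t ^ q = t" using Q_c[of h] Qh by (simp add: t_def c_simps)
    have t0: "t \<noteq> 0" using eps0 two Qh by (simp add: t_def)
    have Ch: "C * h = \<epsilon>" using Cn by (simp add: h_def)
    have ident: "F (x0 + t * h) ^ q - F (x0 + t * h)
        = (F x0 ^ q - F x0) - t * ((C * h) - (C * h) ^ q) - t ^ 2 * Qf h"
      unfolding F_def Qf_def C_def \<delta>_def
      apply (simp add: c_simps tq)
      apply (simp add: algebra_simps power2_eq_square)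
      done
    have L2: "(C * h) - (C * h) ^ q = 2 * \<epsilon>" using Ch by (simp add: eps)
    have "F (x0 + t * h) ^ q - F (x0 + t * h) = 0 - t * (2 * \<epsilon>) - t ^ 2 * Qf h"
      using ident unfolding L2 Fx0 diff_self .
    also have "\<dots> = - t * (2 * \<epsilon> + t * Qf h)" by (simp add: algebra_simps power2_eq_square)
    also have "2 * \<epsilon> + t * Qf h = 0" using Qh by (simp add: t_def)
    finally have "F (x0 + t * h) ^ q = F (x0 + t * h)" by simp
    from key[OF this] have "t * h = 0" by simp
    with t0 h0 show False by simp
  qed
  then have mdef: "m = 2 * \<alpha> * x0 - \<delta> * x0 ^ q" unfolding C_def by (simp add: algebra_simps)
  have "F x0 ^ q - F x0 = Qf x0 - 2 * \<epsilon>"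
    unfolding F_def Qf_def mdef \<delta>_def
    apply (simp add: c_simps)
    apply (simp add: algebra_simps power2_eq_square)
    done
  with Fx0 have "Qf x0 = 2 * \<epsilon>" by simp
  moreover have "y0 = Yf x0" unfolding y0 mdef Yf_def by (simp add: algebra_simps power2_eq_square)
  ultimately show ?thesis using X by blast
qed


lemma main_count:
  assumes Lp: "L \<in> pg_lines" and nU: "proj_pt (1, 0, 0) \<notin> L"
  shows "card (L \<inter> pedal (unital_ab q \<alpha> \<beta>) (proj_pt (0, \<epsilon>, 1))) \<le> 2"
proof -
  let ?S = "L \<inter> pedal (unital_ab q \<alpha> \<beta>) (proj_pt (0, \<epsilon>, 1))"
  obtain a b c where L: "L = line_of (a, b, c)"
    using Lp unfolding pg_lines_def by auto
  have memL: "\<And>x y z. (x, y, z) \<noteq> (0, 0, 0) \<Longrightarrow> proj_pt (x, y, z) \<in> L \<longleftrightarrow> a * x + b * y + c * z = 0"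
    unfolding L by (rule mem_line)
  have a0: "a \<noteq> 0" using nU memL[of 1 0 0] by auto
  have S: "\<exists>x0. X = proj_pt (x0, Yf x0, 1) \<and> Qf x0 = 2 * \<epsilon> \<and> a * x0 + b * Yf x0 + c = 0"
    if "X \<in> ?S" for X
  proof -
    from that pedal_char obtain x0 where X: "X = proj_pt (x0, Yf x0, 1)" "Qf x0 = 2 * \<epsilon>" by blast
    with that have "proj_pt (x0, Yf x0, 1) \<in> L" by simp
    with memL[of x0 "Yf x0" 1] have "a * x0 + b * Yf x0 + c = 0" by simp
    with X show ?thesis by blast
  qed
  show ?thesis
  proof (cases "b = 0")
    case True
    have "?S \<subseteq> {proj_pt (- c / a, Yf (- c / a), 1)}"
    proof
      fix X assume "X \<in> ?S"
      from S[OF this] obtain x0 where X: "X = proj_pt (x0, Yf x0, 1)" "a * x0 + b * Yf x0 + c = 0" by blast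
      then have "x0 = - c / a" using True a0 by (simp add: field_simps eq_neg_iff_add_eq_0)
      with X show "X \<in> {proj_pt (- c / a, Yf (- c / a), 1)}" by simp
    qed
    then have "card ?S \<le> card {proj_pt (- c / a, Yf (- c / a), 1)}" by (rule card_mono[rotated]) simp
    then show ?thesis by simp
  next
    case False
    define k where "k = - b / a"
    define p0 where "p0 = (b * \<epsilon> - c) / a"
    define Bl where "Bl = 2 * \<alpha> ^ q * p0 ^ q * k ^ q - 2 * \<alpha> * p0 * k + \<delta> * (p0 * k ^ q + k * p0 ^ q)"
    let ?R = "{t. Qf k * t ^ 2 + Bl * t + (Qf p0 - 2 * \<epsilon>) = 0}"
    have sub: "?S \<subseteq> (\<lambda>t. proj_pt (p0 + k * t, t - \<epsilon>, 1)) ` ?R"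
    proof
      fix X assume "X \<in> ?S"
      from S[OF this] obtain x0 where X: "X = proj_pt (x0, Yf x0, 1)" and Q: "Qf x0 = 2 * \<epsilon>"
        and E: "a * x0 + b * Yf x0 + c = 0" by blast
      define t where "t = Yf x0 + \<epsilon>"
      have "t = 2 * \<alpha> * x0 ^ 2 - \<delta> * x0 * x0 ^ q + 2 * \<epsilon>" by (simp add: t_def Yf_def)
      also have "\<dots> = \<alpha> * x0 ^ 2 + \<alpha> ^ q * (x0 ^ q) ^ 2"
        by (subst Q[symmetric]) (simp add: Qf_def algebra_simps)
      finally have tv: "t = \<alpha> * x0 ^ 2 + \<alpha> ^ q * (x0 ^ q) ^ 2" .
      have tq: "t ^ q = t" unfolding tv by (simp add: c_simps add.commute)
      have Yt: "Yf x0 = t - \<epsilon>" by (simp add: t_def)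
      have e1: "a * (p0 + k * t) = b * \<epsilon> - c - b * t" using a0 by (simp add: k_def p0_def field_simps)
      have e2: "a * x0 = b * \<epsilon> - c - b * t"
      proof -
        have "a * x0 + b * (t - \<epsilon>) + c = 0" using E unfolding Yt .
        then show ?thesis by (simp add: algebra_simps eq_neg_iff_add_eq_0 diff_eq_eq)
      qed
      have x0v: "x0 = p0 + k * t" using e1 e2 a0 by (metis mult_left_cancel)
      have "Qf (p0 + k * t) = Qf k * t ^ 2 + Bl * t + Qf p0"
        unfolding Qf_def Bl_def
        apply (simp add: c_simps tq)
        apply (simp add: algebra_simps power2_eq_square)
        done
      with Q x0v have "Qf k * t ^ 2 + Bl * t + Qf p0 = 2 * \<epsilon>" by simp
      then have "t \<in> ?R" by (simp add: algebra_simps)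
      moreover have "X = proj_pt (p0 + k * t, t - \<epsilon>, 1)" using X x0v Yt by simp
      ultimately show "X \<in> (\<lambda>t. proj_pt (p0 + k * t, t - \<epsilon>, 1)) ` ?R" by blast
    qed
    have "k \<noteq> 0" using False a0 by (simp add: k_def)
    then have "Qf k \<noteq> 0" by (rule aniso)
    then have R2: "card ?R \<le> 2" by (rule quad_card)
    have "card ?S \<le> card ((\<lambda>t. proj_pt (p0 + k * t, t - \<epsilon>, 1)) ` ?R)" by (rule card_mono[OF _ sub]) simp
    also have "\<dots> \<le> card ?R" by (rule card_image_le) simp
    finally show ?thesis using R2 by simp
  qed
qed

end


lemma fermat_fin: "(x::'a::{field,finite}) ^ card (UNIV :: 'a set) = x"
proof (cases "x = 0")
  case False
  have N: "card (UNIV :: 'a set) > 0" by (simp add: finite_UNIV_card_ge_0)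
  have "(\<Prod>y\<in>UNIV-{0}. x * y) = x ^ card (UNIV - {0::'a}) * (\<Prod>y\<in>UNIV-{0::'a}. y)"
    by (simp add: prod.distrib)
  also have "card (UNIV - {0::'a}) = card (UNIV :: 'a set) - 1" by (simp add: card_Diff_singleton)
  also have "(\<Prod>y\<in>UNIV-{0}. x * y) = (\<Prod>y\<in>UNIV-{0::'a}. y)"
    by (rule prod.reindex_bij_witness[of _ "\<lambda>y. y / x" "\<lambda>y. x * y"]) (use False in auto)
  finally have "x ^ (card (UNIV :: 'a set) - 1) = 1" by simp
  then have "x * x ^ (card (UNIV :: 'a set) - 1) = x" by simp
  then show ?thesis using N by (metis Suc_diff_1 power_Suc)
qed (simp add: finite_UNIV_card_ge_0)

lemma frob_add:
  assumes "card (UNIV :: 'a::{field,finite} set) = q ^ 2"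
  shows "((x::'a) + y) ^ q = x ^ q + y ^ q"
proof -
  obtain n where n: "card (UNIV :: 'a set) = CHAR('a) ^ n" using card_CHAR_pow by blast
  have "q dvd CHAR('a) ^ n" using assms n by (metis dvd_triv_left power2_eq_square)
  then obtain i where "q = CHAR('a) ^ i" using divides_primepow_nat[OF prime_CHAR_fin] by blast
  then show ?thesis by (rule freshmans_dream'[OF prime_CHAR_fin])
qed

theorem lemma2p4:
  fixes q :: nat and \<alpha> \<beta> \<zeta> :: "'a::{field,finite}"
  assumes card: "card (UNIV :: 'a set) = q ^ 2"
    and q_odd: "odd q"
    and zeta: "primitive_elem \<zeta>"
    and alpha: "\<alpha> \<noteq> 0"
    and nonsq: "\<not> (\<exists>y. in_Fq q y \<and> y ^ 2 = (\<beta> ^ q - \<beta>) ^ 2 + 4 * \<alpha> ^ (q + 1))"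
    and line: "L \<in> pg_lines"
    and notU: "proj_pt (1, 0, 0) \<notin> L"
  shows "card (L \<inter> pedal (unital_ab q \<alpha> \<beta>) (proj_pt (0, \<zeta> ^ ((q + 1) div 2), 1))) \<in> {0, 1, 2}"
proof -
  let ?N = "card (UNIV :: 'a set)"
  have "card {0::'a, 1} \<le> ?N" by (rule card_mono) auto
  then have N2: "?N \<ge> 2" by simp
  obtain j where qj: "q = 2 * j + 1" using q_odd oddE by blast
  have j1: "j \<ge> 1"
  proof (rule ccontr)
    assume "\<not> j \<ge> 1"
    then have "q = 1" using qj by simp
    then show False using N2 card by simp
  qed
  have cinv: "(x ^ q) ^ q = x" for x :: 'a
    using fermat_fin[of x] card by (simp add: power_mult[symmetric] power2_eq_square)
  have z0: "\<zeta> \<noteq> 0" using zeta by (simp add: primitive_elem_def)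
  have zN: "\<zeta> ^ (?N - 1) = 1"
  proof -
    have "\<zeta> * \<zeta> ^ (?N - 1) = \<zeta> ^ ?N" using N2 by (metis Suc_diff_1 power_Suc less_le_trans zero_less_numeral)
    also have "\<dots> = \<zeta>" by (rule fermat_fin)
    finally show ?thesis using z0 by simp
  qed
  define k where "k = 2 * j * j + 2 * j"
  have Nk: "?N - 1 = 2 * k" using card qj by (simp add: k_def power2_eq_square algebra_simps)
  define w where "w = \<zeta> ^ k"
  have w2: "w * w = 1" using zN Nk by (simp add: w_def power_add[symmetric] mult_2)
  have w1: "w \<noteq> 1"
  proof -
    have "0 < k" "k < ?N - 1" using j1 Nk by (auto simp: k_def)
    then show ?thesis using zeta by (simp add: primitive_elem_def w_def)
  qed
  have wm: "w = - 1"
  proof -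
    have "(w - 1) * (w + 1) = 0" using w2 by (simp add: algebra_simps)
    with w1 show ?thesis by (simp add: eq_neg_iff_add_eq_0)
  qed
  have two: "(2::'a) \<noteq> 0"
  proof
    assume "(2::'a) = 0"
    then have "(1::'a) + 1 = 0" by simp
    then have "- (1::'a) = 1" by (simp add: eq_neg_iff_add_eq_0)
    with wm w1 show False by simp
  qed
  define \<epsilon> where "\<epsilon> = \<zeta> ^ ((q + 1) div 2)"
  have e0: "\<epsilon> \<noteq> 0" using z0 by (simp add: \<epsilon>_def)
  have qe: "(q + 1) div 2 = j + 1" using qj by simp
  have "\<epsilon> ^ q = \<zeta> ^ ((j + 1) + k)"
    unfolding \<epsilon>_def qe power_mult[symmetric] by (simp add: qj k_def algebra_simps)
  also have "\<dots> = \<epsilon> * w" unfolding \<epsilon>_def qe w_def by (simp only: power_add)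
  finally have eq: "\<epsilon> ^ q = - \<epsilon>" using wm by simp
  interpret uctx q \<alpha> \<beta> \<epsilon>
  proof
    show "(x + y) ^ q = x ^ q + y ^ q" for x y :: 'a by (rule frob_add[OF card])
  qed (use cinv qj eq e0 two alpha nonsq in auto)
  have "card (L \<inter> pedal (unital_ab q \<alpha> \<beta>) (proj_pt (0, \<epsilon>, 1))) \<le> 2"
    by (rule main_count[OF line notU])
  moreover have gen: "\<And>n::nat. n \<le> 2 \<Longrightarrow> n \<in> {0, 1, 2}" by auto
  ultimately show ?thesis unfolding \<epsilon>_def by blast
qed

end
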